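(* Let $z_1,\dots,z_n\in\mathbb{Q}[\mathbf{i}]$ (not necessarily distinct) be nonzero and satisfy $|z_j|=|z_k|$ for all $j,k\in[n]$. Write $n=2^s m$ with $s\in\mathbb{Z}_{\ge0}$ and $m$ odd. Then there exists $j\in\{0,1,\dots,s\}$ such that $\sum_{k=1}^n z_k^{2^j}\neq 0$.
   Context: $\mathbb{Q}[\mathbf{i}]=\{x+y\mathbf{i}: x,y\in\mathbb{Q}\}$, $[n]=\{1,\dots,n\}$. (In the paper's notation the quantity $\sum_k z_k^{p}$ is the complex moment $M_p(S)$ of $S=\{z_1,\dots,z_n\}$.) *)

theory Defs
  imports "HOL-Analysis.Analysis"
begin

definition gauss_rat :: "complex set" where
  "gauss_rat = {z. Re z \<in> \<rat> \<and> Im z \<in> \<rat>}"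

end

theory Submission
  imports Defs
begin

definition DD :: "nat \<Rightarrow> complex \<Rightarrow> bool" where
  "DD e x \<longleftrightarrow> (\<exists>c a b :: int. odd c \<and> of_int c * x = of_int (2^e) * (of_int a + \<i> * of_int b))"

lemma DD_zero: "DD e 0"
  unfolding DD_def by (rule exI[of _ 1], rule exI[of _ 0], rule exI[of _ 0]) auto

lemma DD_int: "DD e (of_int (2^e) * (of_int a + \<i> * of_int b))"
  unfolding DD_def by (rule exI[of _ 1]) auto

lemma DD_add: assumes "DD e x" "DD e y" shows "DD e (x + y)"
proof -
  from assms obtain c1 a1 b1 c2 a2 b2 where h: "odd c1" "of_int c1 * x = of_int (2^e) * (of_int a1 + \<i> * of_int b1)"
    "odd c2" "of_int c2 * y = of_int (2^e) * (of_int a2 + \<i> * of_int b2)" unfolding DD_def by blast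
  have "of_int (c1*c2) * (x + y) = of_int c2 * (of_int c1 * x) + of_int c1 * (of_int c2 * y)"
    by (simp add: algebra_simps)
  also have "\<dots> = of_int (2^e) * (of_int (c2*a1+c1*a2) + \<i> * of_int (c2*b1+c1*b2))"
    unfolding h(2) h(4) by (simp add: algebra_simps)
  finally have "of_int (c1*c2) * (x + y) = of_int (2^e) * (of_int (c2*a1+c1*a2) + \<i> * of_int (c2*b1+c1*b2))" .
  moreover have "odd (c1*c2)" using h by simp
  ultimately show ?thesis unfolding DD_def by blast
qed

lemma DD_uminus: assumes "DD e x" shows "DD e (- x)"
proof -
  from assms obtain c a b where h: "odd c" "of_int c * x = of_int (2^e) * (of_int a + \<i> * of_int b)"
    unfolding DD_def by blast
  have "of_int c * (-x) = of_int (2^e) * (of_int (-a) + \<i> * of_int (-b))"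
    using h(2) by (simp add: algebra_simps)
  then show ?thesis unfolding DD_def using h by blast
qed

lemma DD_diff: "DD e x \<Longrightarrow> DD e y \<Longrightarrow> DD e (x - y)"
  using DD_add[of e x "-y"] DD_uminus[of e y] by simp

lemma DD_mult: assumes "DD e x" "DD f y" shows "DD (e+f) (x * y)"
proof -
  from assms obtain c1 a1 b1 c2 a2 b2 where h: "odd c1" "of_int c1 * x = of_int (2^e) * (of_int a1 + \<i> * of_int b1)"
    "odd c2" "of_int c2 * y = of_int (2^f) * (of_int a2 + \<i> * of_int b2)" unfolding DD_def by blast
  have "of_int (c1*c2) * (x * y) = (of_int c1 * x) * (of_int c2 * y)"
    by (simp add: algebra_simps)
  also have "\<dots> = of_int (2^(e+f)) * (of_int (a1*a2-b1*b2) + \<i> * of_int (a1*b2+a2*b1))"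
    unfolding h(2) h(4) by (simp add: algebra_simps power_add)
  finally have "of_int (c1*c2) * (x * y) = of_int (2^(e+f)) * (of_int (a1*a2-b1*b2) + \<i> * of_int (a1*b2+a2*b1))" .
  moreover have "odd (c1*c2)" using h by simp
  ultimately show ?thesis unfolding DD_def by blast
qed

lemma DD_mono: assumes "DD f x" "e \<le> f" shows "DD e x"
proof -
  from assms obtain c a b where h: "odd c" "of_int c * x = of_int (2^f) * (of_int a + \<i> * of_int b)"
    unfolding DD_def by blast
  have f: "(2::int)^f = 2^e * 2^(f-e)" using assms(2) by (simp add: power_add[symmetric])
  have "of_int c * x = of_int (2^e) * (of_int (2^(f-e)*a) + \<i> * of_int (2^(f-e)*b))"
    unfolding h(2) f by (simp add: algebra_simps)
  then show ?thesis unfolding DD_def using h by blast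
qed

lemma DD_sum: "finite S \<Longrightarrow> (\<forall>k\<in>S. DD e (f k)) \<Longrightarrow> DD e (\<Sum>k\<in>S. f k)"
  by (induction S rule: finite_induct) (auto intro: DD_zero DD_add)

lemma DD_dvd: assumes "DD e (of_int A + \<i> * of_int B)" shows "2^e dvd A \<and> 2^e dvd B"
proof -
  from assms obtain c a b where h: "odd c" "of_int c * (of_int A + \<i> * of_int B) = of_int (2^e) * (of_int a + \<i> * of_int b)"
    unfolding DD_def by blast
  from h(2) have "of_int (c * A) = (of_int (2^e * a)::real) \<and> of_int (c * B) = (of_int (2^e * b)::real)"
    by (simp add: complex_eq_iff)
  hence "c * A = 2^e * a" "c * B = 2^e * b" by (simp_all only: of_int_eq_iff)
  moreover have "coprime ((2::int)^e) c" using h(1) by simp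
  ultimately show ?thesis
    by (metis coprime_dvd_mult_right_iff dvd_triv_left)
qed

lemma sq_mod4: "(x::int)^2 mod 4 = (if even x then 0 else 1)"
proof -
  have "x mod 4 \<in> {0,1,2,3}" by auto
  moreover have "x^2 mod 4 = (x mod 4)^2 mod 4" by (simp add: power_mod)
  moreover have "even x \<longleftrightarrow> even (x mod 4)" by (simp add: even_mod_4_div_2 dvd_mod_iff)
  ultimately show ?thesis by auto
qed

lemma sq_mod8: "odd (x::int) \<Longrightarrow> x^2 mod 8 = 1"
proof -
  assume "odd x"
  have "x mod 8 \<in> {0,1,2,3,4,5,6,7}" by auto
  moreover have "x^2 mod 8 = (x mod 8)^2 mod 8" by (simp add: power_mod)
  moreover have "odd (x mod 8)" using \<open>odd x\<close> by (simp add: dvd_mod_iff)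
  ultimately show ?thesis by auto
qed

lemma pyth_case:
  fixes P Q C :: int
  assumes eq: "P^2 + Q^2 = C^2" and Codd: "odd C" and Pev: "even P"
  shows "4 dvd P \<and> (\<exists>e. (e = 1 \<or> e = -1) \<and> 4 dvd (Q - e * C))"
proof -
  have Qodd: "odd Q" using eq Codd Pev by (metis even_add even_power zero_less_numeral)
  have "P^2 = C^2 - Q^2" using eq by simp
  hence "P^2 mod 8 = 0" using sq_mod8[OF Codd] sq_mod8[OF Qodd] by (simp add: mod_diff_eq[symmetric])
  moreover obtain P' where P': "P = 2*P'" using Pev by blast
  ultimately have "(4 * P'^2) mod 8 = 0" by (simp add: power_mult_distrib)
  moreover have "\<And>u::int. (4*u) mod 8 = 0 \<Longrightarrow> even u" by presburger
  ultimately have "even (P'^2)" by metis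
  hence "even P'" by simp
  hence "4 dvd P" using P' by auto
  moreover have "4 dvd (Q - 1 * C) \<or> 4 dvd (Q - (-1) * C)" using Qodd Codd by presburger
  ultimately show ?thesis by blast
qed

definition units4 :: "(int \<times> int) set" where
  "units4 = {(1,0),(-1,0),(0,1),(0,-1)}"

lemma pyth:
  fixes C :: nat
  shows "\<And>P Q. P^2 + Q^2 = (int C)^2 \<Longrightarrow> C > 0 \<Longrightarrow> \<exists>\<alpha> \<beta>. (\<alpha>,\<beta>) \<in> units4 \<and>
     DD 2 (Complex (of_int P / of_int C) (of_int Q / of_int C) - (of_int \<alpha> + \<i> * of_int \<beta>))"
proof (induction C rule: less_induct)
  case (less C P Q)
  show ?case
  proof (cases "even C")
    case True
    then obtain C' where C': "C = 2*C'" by blast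
    have "(P^2 + Q^2) mod 4 = 0" using less.prems(1) C' by (simp add: power_mult_distrib)
    hence "(P^2 mod 4 + Q^2 mod 4) mod 4 = 0" by (simp add: mod_add_eq)
    hence "even P \<and> even Q" unfolding sq_mod4 by (auto split: if_splits)
    then obtain P' Q' where PQ: "P = 2*P'" "Q = 2*Q'" by blast
    have "4*(P'^2 + Q'^2) = 4*(int C')^2" using less.prems(1) C' PQ by (simp add: power_mult_distrib)
    hence eq': "P'^2 + Q'^2 = (int C')^2" by simp
    have "C' < C" "C' > 0" using C' less.prems(2) by auto
    from less.IH[OF this(1) eq' this(2)] obtain \<alpha> \<beta> where
      "(\<alpha>,\<beta>) \<in> units4" "DD 2 (Complex (of_int P' / of_int C') (of_int Q' / of_int C') - (of_int \<alpha> + \<i> * of_int \<beta>))"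
      by blast
    moreover have "Complex (of_int P' / of_int C') (of_int Q' / of_int C') = Complex (of_int P / of_int C) (of_int Q / of_int C)"
      using PQ C' by simp
    ultimately show ?thesis by metis
  next
    case False
    hence Codd: "odd (int C)" by simp
    have Cne: "(of_int (int C) :: real) \<noteq> 0" using less.prems(2) by simp
    show ?thesis
    proof (cases "even P")
      case True
      from pyth_case[OF less.prems(1) Codd True] obtain e a b where
        h: "e = 1 \<or> e = -1" "P = 4*a" "Q - e * int C = 4*b" by (metis dvd_def)
      have "of_int (int C) * (Complex (of_int P / of_int C) (of_int Q / of_int C) - (of_int 0 + \<i> * of_int e))
          = of_int (2^2) * (of_int a + \<i> * of_int b)"
      proof -
        have "of_int Q - of_int e * of_int (int C) = (4 * of_int b :: real)"
          using arg_cong[OF h(3), of "of_int :: int \<Rightarrow> real"] by simp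
        then show ?thesis using Cne h(2) by (simp add: complex_eq_iff field_simps)
      qed
      hence "DD 2 (Complex (of_int P / of_int C) (of_int Q / of_int C) - (of_int 0 + \<i> * of_int e))"
        unfolding DD_def using Codd by blast
      moreover have "(0, e) \<in> units4" using h(1) unfolding units4_def by auto
      ultimately show ?thesis by blast
    next
      case False
      have eq2: "Q^2 + P^2 = (int C)^2" using less.prems(1) by simp
      have Qev: "even Q" using less.prems(1) Codd False by (metis even_add even_power zero_less_numeral)
      from pyth_case[OF eq2 Codd Qev] obtain e a b where
        h: "e = 1 \<or> e = -1" "Q = 4*b" "P - e * int C = 4*a" by (metis dvd_def)
      have "of_int (int C) * (Complex (of_int P / of_int C) (of_int Q / of_int C) - (of_int e + \<i> * of_int 0))
          = of_int (2^2) * (of_int a + \<i> * of_int b)"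
      proof -
        have "of_int P - of_int e * of_int (int C) = (4 * of_int a :: real)"
          using arg_cong[OF h(3), of "of_int :: int \<Rightarrow> real"] by simp
        then show ?thesis using Cne h(2) by (simp add: complex_eq_iff field_simps)
      qed
      hence "DD 2 (Complex (of_int P / of_int C) (of_int Q / of_int C) - (of_int e + \<i> * of_int 0))"
        unfolding DD_def using Codd by blast
      moreover have "(e, 0) \<in> units4" using h(1) unfolding units4_def by auto
      ultimately show ?thesis by blast
    qed
  qed
qed

lemma unit_gauss:
  assumes "w \<in> gauss_rat" "cmod w = 1"
  shows "\<exists>\<alpha> \<beta>. (\<alpha>,\<beta>) \<in> units4 \<and> DD 2 (w - (of_int \<alpha> + \<i> * of_int \<beta>))"
proof -
  obtain p1 q1 where h1: "q1 > 0" "Re w = of_int p1 / of_int q1"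
    using assms(1) unfolding gauss_rat_def by (auto elim: Rats_cases')
  obtain p2 q2 where h2: "q2 > 0" "Im w = of_int p2 / of_int q2"
    using assms(1) unfolding gauss_rat_def by (auto elim: Rats_cases')
  define C where "C = nat (q1*q2)"
  have C: "int C = q1 * q2" "C > 0" using h1 h2 unfolding C_def by (auto simp: zero_less_mult_iff)
  have "Re w ^ 2 + Im w ^ 2 = 1" using assms(2) cmod_power2[of w] by simp
  hence "(of_int p1 / of_int q1)^2 + (of_int p2 / of_int q2)^2 = (1::real)" using h1 h2 by simp
  hence "(of_int (p1*q2))^2 + (of_int (p2*q1))^2 = (of_int (q1*q2)::real)^2"
    using h1(1) h2(1) by (simp add: field_simps power2_eq_square)
  hence "real_of_int ((p1*q2)^2 + (p2*q1)^2) = real_of_int ((int C)^2)" unfolding C(1) by simp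
  hence eq: "(p1*q2)^2 + (p2*q1)^2 = (int C)^2" by (simp only: of_int_eq_iff)
  have w: "w = Complex (of_int (p1*q2) / of_int (int C)) (of_int (p2*q1) / of_int (int C))"
    using h1 h2 unfolding C(1) by (simp add: complex_eq_iff)
  from pyth[OF eq C(2)] show ?thesis unfolding w[symmetric] .
qed


lemma sq_step:
  assumes "DD e (x - of_int \<epsilon>)" "\<epsilon> = 1 \<or> \<epsilon> = -1" "e \<ge> 1"
  shows "DD (e+1) (x^2 - 1)"
proof -
  have "DD 1 (of_int (2^1) * (of_int \<epsilon> + \<i> * of_int 0))" by (rule DD_int)
  hence "DD 1 (2 * of_int \<epsilon>)" by simp
  moreover have "DD 1 (x - of_int \<epsilon>)" using DD_mono[OF assms(1) assms(3)] .
  ultimately have "DD 1 ((x - of_int \<epsilon>) + 2 * of_int \<epsilon>)" using DD_add by blast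
  from DD_mult[OF assms(1) this] have "DD (e+1) ((x - of_int \<epsilon>) * ((x - of_int \<epsilon>) + 2 * of_int \<epsilon>))" .
  moreover have "(x - of_int \<epsilon>) * ((x - of_int \<epsilon>) + 2 * of_int \<epsilon>) = x^2 - 1"
    using assms(2) by (auto simp: algebra_simps power2_eq_square)
  ultimately show ?thesis by simp
qed

lemma pow_step:
  assumes "DD 3 (x^2 - of_int \<epsilon>)" "\<epsilon> = 1 \<or> \<epsilon> = -1" "j \<ge> 2"
  shows "DD (j+2) (x^(2^j) - 1)"
  using assms(3)
proof (induction j rule: dec_induct)
  case base
  have "DD (3+1) ((x^2)^2 - 1)" by (rule sq_step[OF assms(1) assms(2)]) simp
  then show ?case by (simp add: power_mult[symmetric])
next
  case (step j)
  have "DD (j+2+1) ((x^(2^j))^2 - 1)" by (rule sq_step[of _ _ 1]) (use step.IH in auto)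
  then show ?case by (simp add: power_mult[symmetric] mult.commute)
qed

lemma sum_zero_dvd:
  assumes "sum w S = 0" "finite S" "\<forall>k\<in>S. DD e (w k - (of_int (a k) + \<i> * of_int (b k)))"
  shows "2^e dvd (\<Sum>k\<in>S. a k) \<and> 2^e dvd (\<Sum>k\<in>S. b k)"
proof -
  have "DD e (\<Sum>k\<in>S. (w k - (of_int (a k) + \<i> * of_int (b k))))" by (rule DD_sum[OF assms(2) assms(3)])
  moreover have "(\<Sum>k\<in>S. (w k - (of_int (a k) + \<i> * of_int (b k)))) = sum w S - (\<Sum>k\<in>S. of_int (a k)) - \<i> * (\<Sum>k\<in>S. of_int (b k))"
    by (simp only: sum_subtractf sum.distrib sum_distrib_left diff_diff_eq)
  moreover have "\<dots> = - (of_int (\<Sum>k\<in>S. a k) + \<i> * of_int (\<Sum>k\<in>S. b k))"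
    using assms(1) by (simp only: of_int_sum) simp
  ultimately have "DD e (- (of_int (\<Sum>k\<in>S. a k) + \<i> * of_int (\<Sum>k\<in>S. b k)))" by simp
  from DD_uminus[OF this] have "DD e (of_int (\<Sum>k\<in>S. a k) + \<i> * of_int (\<Sum>k\<in>S. b k))" by (simp only: minus_minus)
  then show ?thesis by (rule DD_dvd)
qed

lemma gauss_div: "x \<in> gauss_rat \<Longrightarrow> y \<in> gauss_rat \<Longrightarrow> x / y \<in> gauss_rat"
  unfolding gauss_rat_def by (simp add: Re_divide Im_divide)

theorem theorem1p5:
  fixes z :: "nat \<Rightarrow> complex" and n s m :: nat
  assumes "\<forall>k\<in>{1..n}. z k \<in> gauss_rat"
    and "\<forall>k\<in>{1..n}. z k \<noteq> 0"
    and "\<forall>j\<in>{1..n}. \<forall>k\<in>{1..n}. cmod (z j) = cmod (z k)"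
    and "n = 2 ^ s * m" and "odd m"
  shows "\<exists>j\<in>{0..s}. (\<Sum>k=1..n. z k ^ (2 ^ j)) \<noteq> 0"
proof (rule ccontr)
  assume "\<not> ?thesis"
  hence Z: "\<forall>j\<in>{0..s}. (\<Sum>k=1..n. z k ^ (2 ^ j)) = 0" by blast
  have "m > 0" using assms(5) by (intro Nat.gr0I) auto
  hence "n \<ge> 1" using assms(4) by simp
  hence one: "1 \<in> {1..n}" by simp
  define w where "w k = z k / z 1" for k
  have z1: "z 1 \<noteq> 0" "z 1 \<in> gauss_rat" using assms(1,2) one by auto
  have wg: "w k \<in> gauss_rat" "cmod (w k) = 1" if "k \<in> {1..n}" for k
  proof -
    show "w k \<in> gauss_rat" unfolding w_def using gauss_div[of "z k" "z 1"] assms(1) that z1 by blast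
    have "cmod (z k) = cmod (z 1)" using assms(3) that one by blast
    moreover have "cmod (z 1) \<noteq> 0" using z1 by simp
    ultimately show "cmod (w k) = 1" unfolding w_def by (simp add: norm_divide)
  qed
  have zw: "z k ^ N = z 1 ^ N * w k ^ N" for k N unfolding w_def using z1 by (simp add: power_divide)
  have W: "(\<Sum>k=1..n. w k ^ (2 ^ j)) = 0" if "j \<in> {0..s}" for j
  proof -
    have "(\<Sum>k=1..n. z k ^ (2 ^ j)) = (\<Sum>k=1..n. z 1 ^ (2^j) * w k ^ (2 ^ j))"
      by (rule sum.cong[OF refl], rule zw)
    also have "\<dots> = z 1 ^ (2^j) * (\<Sum>k=1..n. w k ^ (2 ^ j))" by (rule sum_distrib_left[symmetric])
    finally have "(\<Sum>k=1..n. z k ^ (2 ^ j)) = z 1 ^ (2^j) * (\<Sum>k=1..n. w k ^ (2 ^ j))" .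
    with Z that z1 show ?thesis by simp
  qed
  have "\<forall>k\<in>{1..n}. \<exists>ab. ab \<in> units4 \<and> DD 2 (w k - (of_int (fst ab) + \<i> * of_int (snd ab)))"
    using unit_gauss wg by fastforce
  then obtain g where g: "\<forall>k\<in>{1..n}. g k \<in> units4 \<and> DD 2 (w k - (of_int (fst (g k)) + \<i> * of_int (snd (g k))))"
    by metis
  define \<alpha> where "\<alpha> k = fst (g k)" for k
  define \<beta> where "\<beta> k = snd (g k)" for k
  define \<epsilon> where "\<epsilon> k = \<alpha> k ^ 2 - \<beta> k ^ 2" for k
  have ab: "(\<alpha> k, \<beta> k) \<in> units4" "DD 2 (w k - (of_int (\<alpha> k) + \<i> * of_int (\<beta> k)))" if "k \<in> {1..n}" for k
    using g that unfolding \<alpha>_def \<beta>_def by auto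
  have eps: "\<epsilon> k = 1 \<or> \<epsilon> k = -1" if "k \<in> {1..n}" for k
    using ab(1)[OF that] unfolding \<epsilon>_def units4_def by auto
  have F2: "DD 3 (w k ^ 2 - (of_int (\<epsilon> k) + \<i> * of_int 0))" if "k \<in> {1..n}" for k
  proof -
    let ?z = "of_int (\<alpha> k) + \<i> * of_int (\<beta> k) :: complex"
    have "DD 1 (of_int (2^1) * (of_int (\<alpha> k) + \<i> * of_int (\<beta> k)))" by (rule DD_int)
    hence "DD 1 (2 * ?z)" by simp
    moreover have "DD 1 (w k - ?z)" using DD_mono[OF ab(2)[OF that]] by simp
    ultimately have "DD 1 ((w k - ?z) + 2 * ?z)" using DD_add by blast
    from DD_mult[OF ab(2)[OF that] this] have "DD 3 ((w k - ?z) * ((w k - ?z) + 2 * ?z))" by simp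
    moreover have "(w k - ?z) * ((w k - ?z) + 2 * ?z) = w k ^ 2 - ?z ^ 2"
      by (simp add: algebra_simps power2_eq_square)
    moreover have "?z ^ 2 = of_int (\<epsilon> k)"
      using ab(1)[OF that] unfolding \<epsilon>_def units4_def by (auto simp: power2_eq_square)
    ultimately show ?thesis by simp
  qed
  have "s = 0 \<or> s = 1 \<or> s \<ge> 2" by auto
  then show False
  proof (elim disjE)
    assume s0: "s = 0"
    have "4 dvd (\<Sum>k=1..n. \<alpha> k) \<and> 4 dvd (\<Sum>k=1..n. \<beta> k)"
      using sum_zero_dvd[of w "{1..n}" 2 \<alpha> \<beta>] W[of 0] ab(2) s0 by simp
    moreover have "even (\<Sum>k=1..n. (\<alpha> k + \<beta> k - 1))"
    proof (rule dvd_sum)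
      fix k assume "k \<in> {1..n}"
      from ab(1)[OF this] show "even (\<alpha> k + \<beta> k - 1)" unfolding units4_def by auto
    qed
    moreover have "(\<Sum>k=1..n. (\<alpha> k + \<beta> k - 1)) = (\<Sum>k=1..n. \<alpha> k) + (\<Sum>k=1..n. \<beta> k) - int n"
      by (simp add: sum_subtractf sum.distrib)
    moreover have "odd (int n)" using assms(4,5) s0 by simp
    ultimately show False by auto
  next
    assume s1: "s = 1"
    have "4 dvd (\<Sum>k=1..n. \<beta> k)"
      using sum_zero_dvd[of w "{1..n}" 2 \<alpha> \<beta>] W[of 0] ab(2) s1 by simp
    moreover have "8 dvd (\<Sum>k=1..n. \<epsilon> k)"
      using sum_zero_dvd[of "\<lambda>k. w k ^ 2" "{1..n}" 3 \<epsilon> "\<lambda>_. 0"] W[of 1] F2 s1 by simp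
    moreover have "even (\<Sum>k=1..n. (\<beta> k ^ 2 - \<beta> k))"
    proof (rule dvd_sum)
      fix k assume "k \<in> {1..n}"
      from ab(1)[OF this] show "even (\<beta> k ^ 2 - \<beta> k)" unfolding units4_def by auto
    qed
    moreover have "(\<Sum>k=1..n. \<epsilon> k) = int n - 2 * (\<Sum>k=1..n. \<beta> k) - 2 * (\<Sum>k=1..n. (\<beta> k ^ 2 - \<beta> k))"
    proof -
      have "\<epsilon> k = 1 - 2 * \<beta> k - 2 * (\<beta> k ^ 2 - \<beta> k)" if "k \<in> {1..n}" for k
        using ab(1)[OF that] unfolding \<epsilon>_def units4_def by auto
      hence "(\<Sum>k=1..n. \<epsilon> k) = (\<Sum>k=1..n. 1 - 2 * \<beta> k - 2 * (\<beta> k ^ 2 - \<beta> k))"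
        by (rule sum.cong[OF refl])
      also have "\<dots> = int n - 2 * (\<Sum>k=1..n. \<beta> k) - 2 * (\<Sum>k=1..n. (\<beta> k ^ 2 - \<beta> k))"
        by (simp add: sum_subtractf sum_distrib_left)
      finally show ?thesis .
    qed
    moreover have "int n = 2 * int m" using assms(4) s1 by simp
    moreover have "odd (int m)" using assms(5) by simp
    ultimately show False by presburger
  next
    assume s2: "s \<ge> 2"
    have F3: "DD (s+2) (w k ^ (2^s) - (of_int 1 + \<i> * of_int 0))" if "k \<in> {1..n}" for k
      using pow_step[of "w k" "\<epsilon> k" s] F2[OF that] eps[OF that] s2 by simp
    have "2^(s+2) dvd (\<Sum>k=1..n. (1::int))"
      using sum_zero_dvd[of "\<lambda>k. w k ^ (2^s)" "{1..n}" "s+2" "\<lambda>_. 1" "\<lambda>_. 0"] W[of s] F3 by simp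
    hence "2^s * 4 dvd 2^s * int m" using assms(4) by (simp add: power_add)
    hence "4 dvd int m" by (subst (asm) dvd_mult_cancel_left) auto
    thus False using assms(5) by presburger
  qed
qed
end
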